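(* Let $(X,\mathcal{A})$ be a resolvable design, let $z\geq 2$, and let $\mathcal{P}_1,\dots,\mathcal{P}_z$ be $z$ distinct parallel classes. For each $s\in[z]$ choose two distinct blocks $C_{s,i_s},C_{s,j_s}\in\mathcal{P}_s$. Let $\mathcal{X}$ be the set of $2^z$ users, where the user indexed by $(a_1,\dots,a_z)$ with $a_s\in\{i_s,j_s\}$ has accessible point set $Y_{(a_1,\dots,a_z)}=C_{1,a_1}\cup\cdots\cup C_{z,a_z}$. For a user $m=(a_1,\dots,a_z)\in\mathcal{X}$ let $e_s$ denote the element of $\{i_s,j_s\}\setminus\{a_s\}$ and $f_m=C_{1,e_1}\cap\cdots\cap C_{z,e_z}$. Then for every $m\in\mathcal{X}$, $$f_m=\bigcap_{t\in\mathcal{X}\setminus\{m\}}Y_t.$$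
   Context: A resolvable design $(X,\mathcal{A})$: $X$ a finite set of points, $\mathcal{A}$ a collection of blocks (subsets of $X$ of a common size) partitioned into parallel classes, each parallel class being a set of pairwise disjoint blocks whose union is $X$. *)

theory Defs
  imports Main "HOL-Library.FuncSet" "HOL-Library.Disjoint_Sets"
begin

definition parallel_class :: "'a set \<Rightarrow> 'a set set \<Rightarrow> bool" where
  "parallel_class X P \<longleftrightarrow> disjoint P \<and> \<Union>P = X"

definition resolvable_design :: "'a set \<Rightarrow> 'a set set \<Rightarrow> 'a set set set \<Rightarrow> bool" where
  "resolvable_design X A R \<longleftrightarrow>
     finite X \<and> (\<exists>k. \<forall>B\<in>A. B \<subseteq> X \<and> card B = k) \<and>
     disjoint R \<and> \<Union>R = A \<and> (\<forall>P\<in>R. parallel_class X P)"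

definition users :: "nat \<Rightarrow> (nat \<Rightarrow> nat) \<Rightarrow> (nat \<Rightarrow> nat) \<Rightarrow> (nat \<Rightarrow> nat) set" where
  "users z i j = PiE {1..z} (\<lambda>s. {i s, j s})"

definition user_points :: "nat \<Rightarrow> (nat \<Rightarrow> nat \<Rightarrow> 'a set) \<Rightarrow> (nat \<Rightarrow> nat) \<Rightarrow> 'a set" where
  "user_points z C a = (\<Union>s\<in>{1..z}. C s (a s))"

definition other_index :: "(nat \<Rightarrow> nat) \<Rightarrow> (nat \<Rightarrow> nat) \<Rightarrow> (nat \<Rightarrow> nat) \<Rightarrow> nat \<Rightarrow> nat" where
  "other_index i j a s = (if a s = i s then j s else i s)"

definition f_set :: "nat \<Rightarrow> (nat \<Rightarrow> nat \<Rightarrow> 'a set) \<Rightarrow> (nat \<Rightarrow> nat) \<Rightarrow> (nat \<Rightarrow> nat) \<Rightarrow> (nat \<Rightarrow> nat) \<Rightarrow> 'a set" where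
  "f_set z C i j m = (\<Inter>s\<in>{1..z}. C s (other_index i j m s))"

end

theory Submission
  imports Defs
begin

theorem lemma6:
  fixes X :: "'a set" and A :: "'a set set" and R :: "'a set set set"
    and z :: nat and P :: "nat \<Rightarrow> 'a set set" and C :: "nat \<Rightarrow> nat \<Rightarrow> 'a set"
    and i j :: "nat \<Rightarrow> nat"
  assumes "resolvable_design X A R"
    and "z \<ge> 2"
    and "\<forall>s\<in>{1..z}. P s \<in> R"
    and "inj_on P {1..z}"
    and "\<forall>s\<in>{1..z}. C s (i s) \<in> P s \<and> C s (j s) \<in> P s \<and> C s (i s) \<noteq> C s (j s)"
  shows "\<forall>m\<in>users z i j. f_set z C i j m = (\<Inter>t\<in>users z i j - {m}. user_points z C t)"
proof
  fix m assume m: "m \<in> users z i j"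
  have ms: "\<And>s. s \<in> {1..z} \<Longrightarrow> m s \<in> {i s, j s}" and mu: "\<And>s. s \<notin> {1..z} \<Longrightarrow> m s = undefined"
    using m by (auto simp: users_def PiE_def extensional_def)
  have disj: "\<And>s. s \<in> {1..z} \<Longrightarrow> C s (i s) \<inter> C s (j s) = {}"
  proof -
    fix s assume s: "s \<in> {1..z}"
    have "parallel_class X (P s)" using assms(1,3) s by (auto simp: resolvable_design_def)
    then have "disjoint (P s)" by (simp add: parallel_class_def)
    then show "C s (i s) \<inter> C s (j s) = {}" using assms(5) s
      by (auto simp: disjoint_def pairwise_def disjnt_def)
  qed
  have ij: "\<And>s. s \<in> {1..z} \<Longrightarrow> i s \<noteq> j s" using assms(5) by metis
  show "f_set z C i j m = (\<Inter>t\<in>users z i j - {m}. user_points z C t)"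
  proof (rule set_eqI, rule iffI)
    fix x assume x: "x \<in> f_set z C i j m"
    show "x \<in> (\<Inter>t\<in>users z i j - {m}. user_points z C t)"
    proof
      fix t assume t: "t \<in> users z i j - {m}"
      then have ts: "\<And>s. s \<in> {1..z} \<Longrightarrow> t s \<in> {i s, j s}" and tu: "\<And>s. s \<notin> {1..z} \<Longrightarrow> t s = undefined"
        by (auto simp: users_def PiE_def extensional_def)
      obtain s where "t s \<noteq> m s" using t by auto
      then have s: "s \<in> {1..z}" using tu mu by fastforce
      have "t s = other_index i j m s" using ts[OF s] ms[OF s] \<open>t s \<noteq> m s\<close>
        by (auto simp: other_index_def)
      then show "x \<in> user_points z C t" using x s unfolding f_set_def user_points_def by (metis (no_types, lifting) INT_E UN_I)
    qed
  next
    fix x assume x: "x \<in> (\<Inter>t\<in>users z i j - {m}. user_points z C t)"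
    define t where "t = (\<lambda>s. if s \<in> {1..z} then (if x \<notin> C s (other_index i j m s) then other_index i j m s else m s) else undefined)"
    have oi: "\<And>s. s \<in> {1..z} \<Longrightarrow> other_index i j m s \<in> {i s, j s}" by (auto simp: other_index_def)
    have tu: "t \<in> users z i j" using ms oi unfolding users_def t_def by (auto simp: PiE_def extensional_def)
    have nx: "x \<notin> user_points z C t"
    proof
      assume "x \<in> user_points z C t"
      then obtain s where s: "s \<in> {1..z}" and xs: "x \<in> C s (t s)" by (auto simp: user_points_def)
      show False
      proof (cases "x \<in> C s (other_index i j m s)")
        case True
        then have "x \<in> C s (m s)" using xs s by (simp add: t_def)
        then show ?thesis using True disj[OF s] ms[OF s] ij[OF s]
          by (auto simp: other_index_def)
      next
        case False then show ?thesis using xs s by (simp add: t_def)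
      qed
    qed
    then have "t = m" using x tu by blast
    show "x \<in> f_set z C i j m" unfolding f_set_def
    proof
      fix s assume s: "s \<in> {1..z}"
      show "x \<in> C s (other_index i j m s)"
      proof (rule ccontr)
        assume "x \<notin> C s (other_index i j m s)"
        then have "t s = other_index i j m s" using s by (simp add: t_def)
        then show False using \<open>t = m\<close> ms[OF s] ij[OF s] by (auto simp: other_index_def)
      qed
    qed
  qed
qed

end
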